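(* Let $m^*$ be the exact model of the environment and let $m\in\mathcal{M}$ be any model. Fix a base policy $\pi^b$, and let $\pi_m^r$ be the rollout policy and $\pi_m^{ce}$ the certainty-equivalence policy obtained from $\pi^b$ in $m$. Suppose $m$ is a performance-resembling model (PRM) of $m^*$ with respect to $\Pi=\{\pi_m^r,\pi_m^{ce}\}$ and $J$. Then $J_{m^*}^{\pi_m^{ce}}\ge J_{m^*}^{\pi_m^{r}}$.
   Context: Fix finite sets $\mathcal{S}$ (states) and $\mathcal{A}$ (actions) and a discount factor $\gamma\in[0,1)$. A model is a triple $m=(p,r,d)$ with transition kernel $p:\mathcal{S}\times\mathcal{A}\times\mathcal{S}\to[0,1]$, reward function $r:\mathcal{S}\times\mathcal{A}\times\mathcal{S}\to\mathbb{R}$ and initial state distribution $d$ on $\mathcal{S}$; $\mathcal{M}$ is the set of all such models, and $m^*\in\mathcal{M}$ denotes the exact model of the environment. A policy is a map $\pi:\mathcal{S}\times\mathcal{A}\to[0,1]$ giving a distribution over actions at each state; $\mathbb{\Pi}$ is the set of all policies. For $m=(p,r,d)$ and $\pi\in\mathbb{\Pi}$, the performance is $J_m^\pi=\mathbb{E}_{\pi,p}[\sum_{t=0}^\infty\gamma^t r(S_t,A_t,S_{t+1})\mid S_0\sim d]$. Given a base policy $\pi^b$ and a model $m$, the rollout policy $\pi_m^r$ is the policy obtained by one step of policy iteration on $\pi^b$ in $m$ (policy evaluation of $\pi^b$ in $m$ followed by greedy policy improvement), and the certainty-equivalence policy $\pi_m^{ce}$ is the policy obtained by running policy iteration or value iteration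 to convergence in $m$ starting from $\pi^b$ (an optimal policy of $m$). Given $\Pi\subseteq\mathbb{\Pi}$, a model $m$ is a performance-resembling model (PRM) of $m^*$ w.r.t. $\Pi$ and $J$ if for all $\pi^i,\pi^j\in\Pi$, $J_m^{\pi^i}\ge J_m^{\pi^j}$ implies $J_{m^*}^{\pi^i}\ge J_{m^*}^{\pi^j}$. *)

theory Defs
  imports "HOL-Analysis.Analysis"
begin

type_synonym ('s, 'a) model =
  "('s \<Rightarrow> 'a \<Rightarrow> 's \<Rightarrow> real) \<times> ('s \<Rightarrow> 'a \<Rightarrow> 's \<Rightarrow> real) \<times> ('s \<Rightarrow> real)"

type_synonym ('s, 'a) policy = "'s \<Rightarrow> 'a \<Rightarrow> real"

definition trans_of :: "('s, 'a) model \<Rightarrow> 's \<Rightarrow> 'a \<Rightarrow> 's \<Rightarrow> real" where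
  "trans_of m = fst m"
definition rew_of :: "('s, 'a) model \<Rightarrow> 's \<Rightarrow> 'a \<Rightarrow> 's \<Rightarrow> real" where
  "rew_of m = fst (snd m)"
definition init_of :: "('s, 'a) model \<Rightarrow> 's \<Rightarrow> real" where
  "init_of m = snd (snd m)"

definition valid_model :: "('s::finite, 'a::finite) model \<Rightarrow> bool" where
  "valid_model m \<longleftrightarrow>
     (\<forall>s a s'. 0 \<le> trans_of m s a s') \<and> (\<forall>s a. (\<Sum>s'\<in>UNIV. trans_of m s a s') = 1) \<and>
     (\<forall>s. 0 \<le> init_of m s) \<and> (\<Sum>s\<in>UNIV. init_of m s) = 1"

definition is_policy :: "('s::finite, 'a::finite) policy \<Rightarrow> bool" where
  "is_policy \<pi> \<longleftrightarrow> (\<forall>s a. 0 \<le> \<pi> s a) \<and> (\<forall>s. (\<Sum>a\<in>UNIV. \<pi> s a) = 1)"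

primrec state_dist :: "('s::finite \<Rightarrow> 'a::finite \<Rightarrow> 's \<Rightarrow> real) \<Rightarrow> ('s, 'a) policy
    \<Rightarrow> ('s \<Rightarrow> real) \<Rightarrow> nat \<Rightarrow> 's \<Rightarrow> real" where
  "state_dist p \<pi> d 0 = d"
| "state_dist p \<pi> d (Suc t) =
     (\<lambda>s'. \<Sum>s\<in>UNIV. \<Sum>a\<in>UNIV. state_dist p \<pi> d t s * \<pi> s a * p s a s')"

definition perf_from :: "real \<Rightarrow> ('s::finite \<Rightarrow> 'a::finite \<Rightarrow> 's \<Rightarrow> real)
    \<Rightarrow> ('s \<Rightarrow> 'a \<Rightarrow> 's \<Rightarrow> real) \<Rightarrow> ('s \<Rightarrow> real) \<Rightarrow> ('s, 'a) policy \<Rightarrow> real" where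
  "perf_from \<gamma> p r d \<pi> =
     (\<Sum>t. \<gamma> ^ t * (\<Sum>s\<in>UNIV. \<Sum>a\<in>UNIV. \<Sum>s'\<in>UNIV.
        state_dist p \<pi> d t s * \<pi> s a * p s a s' * r s a s'))"

definition J :: "real \<Rightarrow> ('s::finite, 'a::finite) model \<Rightarrow> ('s, 'a) policy \<Rightarrow> real" where
  "J \<gamma> m \<pi> = perf_from \<gamma> (trans_of m) (rew_of m) (init_of m) \<pi>"

definition V :: "real \<Rightarrow> ('s::finite, 'a::finite) model \<Rightarrow> ('s, 'a) policy \<Rightarrow> 's \<Rightarrow> real" where
  "V \<gamma> m \<pi> s = perf_from \<gamma> (trans_of m) (rew_of m) (\<lambda>s0. if s0 = s then 1 else 0) \<pi>"

definition Q :: "real \<Rightarrow> ('s::finite, 'a::finite) model \<Rightarrow> ('s, 'a) policy \<Rightarrow> 's \<Rightarrow> 'a \<Rightarrow> real" where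
  "Q \<gamma> m \<pi> s a = (\<Sum>s'\<in>UNIV. trans_of m s a s' * (rew_of m s a s' + \<gamma> * V \<gamma> m \<pi> s'))"

text \<open>Rollout policy: one step of policy iteration on pi_b in m, i.e. a policy greedy w.r.t.
  Q_m^{pi_b} (only maximizing actions get positive probability; ties broken arbitrarily).\<close>
definition is_rollout_policy :: "real \<Rightarrow> ('s::finite, 'a::finite) model \<Rightarrow> ('s, 'a) policy
    \<Rightarrow> ('s, 'a) policy \<Rightarrow> bool" where
  "is_rollout_policy \<gamma> m \<pi>b \<pi> \<longleftrightarrow> is_policy \<pi> \<and>
     (\<forall>s a. 0 < \<pi> s a \<longrightarrow> (\<forall>a'. Q \<gamma> m \<pi>b s a' \<le> Q \<gamma> m \<pi>b s a))"

text \<open>Certainty-equivalence policy: the converged output of policy/value iteration in m,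
  i.e. an optimal policy of m (maximal value at every state among all policies).\<close>
definition is_ce_policy :: "real \<Rightarrow> ('s::finite, 'a::finite) model \<Rightarrow> ('s, 'a) policy \<Rightarrow> bool" where
  "is_ce_policy \<gamma> m \<pi> \<longleftrightarrow> is_policy \<pi> \<and>
     (\<forall>\<pi>'. is_policy \<pi>' \<longrightarrow> (\<forall>s. V \<gamma> m \<pi>' s \<le> V \<gamma> m \<pi> s))"

definition is_PRM :: "real \<Rightarrow> ('s::finite, 'a::finite) model \<Rightarrow> ('s, 'a) model
    \<Rightarrow> ('s, 'a) policy set \<Rightarrow> bool" where
  "is_PRM \<gamma> m mstar PS \<longleftrightarrow>
     (\<forall>\<pi>i\<in>PS. \<forall>\<pi>j\<in>PS. J \<gamma> m \<pi>i \<ge> J \<gamma> m \<pi>j \<longrightarrow> J \<gamma> mstar \<pi>i \<ge> J \<gamma> mstar \<pi>j)"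

end

theory Submission
  imports Defs
begin

lemma sd_linear:
  "state_dist p \<pi> d t s' = (\<Sum>s0\<in>UNIV. d s0 * state_dist p \<pi> (\<lambda>x. if x = s0 then 1 else 0) t s')"
proof (induction t arbitrary: s')
  case 0
  then show ?case by (simp add: if_distrib cong: if_cong)
next
  case (Suc t)
  let ?D = "\<lambda>s0. state_dist p \<pi> (\<lambda>x. if x = s0 then 1 else 0) t"
  have "(\<Sum>s0\<in>UNIV. d s0 * (\<Sum>s\<in>UNIV. \<Sum>a\<in>UNIV. ?D s0 s * \<pi> s a * p s a s'))
      = (\<Sum>s0\<in>UNIV. \<Sum>s\<in>UNIV. \<Sum>a\<in>UNIV. d s0 * (?D s0 s * \<pi> s a * p s a s'))"
    by (simp add: sum_distrib_left)
  also have "\<dots> = (\<Sum>s\<in>UNIV. \<Sum>s0\<in>UNIV. \<Sum>a\<in>UNIV. d s0 * (?D s0 s * \<pi> s a * p s a s'))"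
    by (rule sum.swap)
  also have "\<dots> = (\<Sum>s\<in>UNIV. \<Sum>a\<in>UNIV. \<Sum>s0\<in>UNIV. d s0 * (?D s0 s * \<pi> s a * p s a s'))"
    by (rule sum.cong[OF refl], rule sum.swap)
  also have "\<dots> = state_dist p \<pi> d (Suc t) s'"
    using Suc by (simp add: sum_distrib_left sum_distrib_right mult_ac)
  finally show ?case by simp
qed

lemma sd_prob:
  fixes p :: "'s::finite \<Rightarrow> 'a::finite \<Rightarrow> 's \<Rightarrow> real"
  assumes p0: "\<And>s a s'. 0 \<le> p s a s'" and p1: "\<And>s a. (\<Sum>s'\<in>UNIV. p s a s') = 1"
    and "is_policy \<pi>" and d0: "\<And>s. 0 \<le> d s" and d1: "(\<Sum>s\<in>UNIV. d s) = 1"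
  shows "(\<forall>s. 0 \<le> state_dist p \<pi> d t s) \<and> (\<Sum>s\<in>UNIV. state_dist p \<pi> d t s) = 1"
proof (induction t)
  case 0
  then show ?case using d0 d1 by simp
next
  case (Suc t)
  have pi0: "\<And>s a. 0 \<le> \<pi> s a" and pi1: "\<And>s. (\<Sum>a\<in>UNIV. \<pi> s a) = 1"
    using assms(3) unfolding is_policy_def by auto
  have "\<forall>s'. 0 \<le> state_dist p \<pi> d (Suc t) s'"
    using Suc pi0 p0 by (simp add: sum_nonneg)
  moreover have "(\<Sum>s'\<in>UNIV. state_dist p \<pi> d (Suc t) s') = 1"
  proof -
  have "(\<Sum>s'\<in>UNIV. state_dist p \<pi> d (Suc t) s') =
      (\<Sum>s\<in>UNIV. \<Sum>a\<in>UNIV. state_dist p \<pi> d t s * \<pi> s a * (\<Sum>s'\<in>UNIV. p s a s'))"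
  proof -
    have "(\<Sum>s'\<in>UNIV. state_dist p \<pi> d (Suc t) s') =
      (\<Sum>s'\<in>UNIV. \<Sum>s\<in>UNIV. \<Sum>a\<in>UNIV. state_dist p \<pi> d t s * \<pi> s a * p s a s')" by simp
    also have "\<dots> = (\<Sum>s\<in>UNIV. \<Sum>s'\<in>UNIV. \<Sum>a\<in>UNIV. state_dist p \<pi> d t s * \<pi> s a * p s a s')"
      by (rule sum.swap)
    also have "\<dots> = (\<Sum>s\<in>UNIV. \<Sum>a\<in>UNIV. \<Sum>s'\<in>UNIV. state_dist p \<pi> d t s * \<pi> s a * p s a s')"
      by (rule sum.cong[OF refl], rule sum.swap)
    finally show ?thesis by (simp add: sum_distrib_left)
  qed
  also have "\<dots> = (\<Sum>s\<in>UNIV. state_dist p \<pi> d t s * (\<Sum>a\<in>UNIV. \<pi> s a))"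
    by (simp add: p1 sum_distrib_left)
  also have "\<dots> = 1" using Suc pi1 by simp
  finally show ?thesis .
  qed
  ultimately show ?case by simp
qed

lemma le1:
  fixes f :: "'x::finite \<Rightarrow> real"
  assumes "\<And>x. 0 \<le> f x" "(\<Sum>x\<in>UNIV. f x) = 1"
  shows "f y \<le> 1"
proof -
  have "f y \<le> (\<Sum>x\<in>UNIV. f x)"
    by (rule member_le_sum) (use assms in auto)
  then show ?thesis using assms by simp
qed

lemma term_summable:
  fixes p :: "'s::finite \<Rightarrow> 'a::finite \<Rightarrow> 's \<Rightarrow> real"
  assumes p0: "\<And>s a s'. 0 \<le> p s a s'" and p1: "\<And>s a. (\<Sum>s'\<in>UNIV. p s a s') = 1"
    and pol: "is_policy \<pi>" and d0: "\<And>s. 0 \<le> d s" and d1: "(\<Sum>s\<in>UNIV. d s) = 1"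
    and g: "0 \<le> \<gamma>" "\<gamma> < 1"
  shows "summable (\<lambda>t. \<gamma> ^ t * (\<Sum>s\<in>UNIV. \<Sum>a\<in>UNIV. \<Sum>s'\<in>UNIV.
        state_dist p \<pi> d t s * \<pi> s a * p s a s' * r s a s'))"
proof (rule summable_comparison_test)
  define C where "C = (\<Sum>s\<in>UNIV. \<Sum>a\<in>UNIV. \<Sum>s'\<in>UNIV. \<bar>r s a s'\<bar>)"
  have pi0: "\<And>s a. 0 \<le> \<pi> s a" and pi1: "\<And>s. (\<Sum>a\<in>UNIV. \<pi> s a) = 1"
    using pol unfolding is_policy_def by auto
  show "summable (\<lambda>t. C * \<gamma> ^ t)"
    using g by (intro summable_mult summable_geometric) auto
  show "\<exists>N. \<forall>n\<ge>N. norm (\<gamma> ^ n * (\<Sum>s\<in>UNIV. \<Sum>a\<in>UNIV. \<Sum>s'\<in>UNIV.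
        state_dist p \<pi> d n s * \<pi> s a * p s a s' * r s a s')) \<le> C * \<gamma> ^ n"
  proof (intro exI allI impI)
    fix n :: nat
    have sd: "\<And>s. 0 \<le> state_dist p \<pi> d n s \<and> state_dist p \<pi> d n s \<le> 1"
      using sd_prob[OF p0 p1 pol d0 d1, where t=n] le1[of "state_dist p \<pi> d n"] by auto
    have pil: "\<And>s a. \<pi> s a \<le> 1" using le1[of "\<pi> _"] pi0 pi1 by blast
    have pl: "\<And>s a s'. p s a s' \<le> 1" using le1[of "p _ _"] p0 p1 by blast
    have b: "\<bar>state_dist p \<pi> d n s * \<pi> s a * p s a s' * r s a s'\<bar> \<le> \<bar>r s a s'\<bar>" for s a s'
    proof -
      have "0 \<le> state_dist p \<pi> d n s * \<pi> s a * p s a s'"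
        using sd pi0 p0 by simp
      moreover have "state_dist p \<pi> d n s * \<pi> s a * p s a s' \<le> 1"
        using sd pi0 p0 pil pl by (simp add: mult_le_one)
      ultimately show ?thesis
        by (simp add: abs_mult mult_left_le_one_le)
    qed
    have "\<bar>\<Sum>s\<in>UNIV. \<Sum>a\<in>UNIV. \<Sum>s'\<in>UNIV.
        state_dist p \<pi> d n s * \<pi> s a * p s a s' * r s a s'\<bar> \<le> C"
    proof -
      have "\<bar>\<Sum>s\<in>UNIV. \<Sum>a\<in>UNIV. \<Sum>s'\<in>UNIV.
        state_dist p \<pi> d n s * \<pi> s a * p s a s' * r s a s'\<bar> \<le>
        (\<Sum>s\<in>UNIV. \<Sum>a\<in>UNIV. \<Sum>s'\<in>UNIV.
        \<bar>state_dist p \<pi> d n s * \<pi> s a * p s a s' * r s a s'\<bar>)"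
        by (rule order_trans[OF sum_abs], intro sum_mono, rule order_trans[OF sum_abs], intro sum_mono, rule sum_abs)
      also have "\<dots> \<le> C" unfolding C_def by (intro sum_mono b)
      finally show ?thesis .
    qed
    note X = this
    show "norm (\<gamma> ^ n * (\<Sum>s\<in>UNIV. \<Sum>a\<in>UNIV. \<Sum>s'\<in>UNIV.
        state_dist p \<pi> d n s * \<pi> s a * p s a s' * r s a s')) \<le> C * \<gamma> ^ n"
      (is "norm (_ * ?S) \<le> _")
    proof -
      have n0: "0 \<le> \<gamma> ^ n" using g by simp
      have "norm (\<gamma> ^ n * ?S) = \<gamma> ^ n * \<bar>?S\<bar>" using n0 by (simp only: real_norm_def abs_mult abs_of_nonneg)
      also have "\<dots> \<le> \<gamma> ^ n * C" using X n0 by (rule mult_left_mono)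
      also have "\<dots> = C * \<gamma> ^ n" by (rule mult.commute)
      finally show ?thesis .
    qed
  qed
qed

lemma swap3: "(\<Sum>x\<in>A. \<Sum>s\<in>B. \<Sum>a\<in>C. \<Sum>s'\<in>D. f x s a s') = (\<Sum>s\<in>B. \<Sum>a\<in>C. \<Sum>s'\<in>D. \<Sum>x\<in>A. f x s a s')"
proof -
  have "(\<Sum>x\<in>A. \<Sum>s\<in>B. \<Sum>a\<in>C. \<Sum>s'\<in>D. f x s a s') = (\<Sum>s\<in>B. \<Sum>x\<in>A. \<Sum>a\<in>C. \<Sum>s'\<in>D. f x s a s')"
    by (rule sum.swap)
  also have "\<dots> = (\<Sum>s\<in>B. \<Sum>a\<in>C. \<Sum>x\<in>A. \<Sum>s'\<in>D. f x s a s')"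
    by (rule sum.cong[OF refl], rule sum.swap)
  also have "\<dots> = (\<Sum>s\<in>B. \<Sum>a\<in>C. \<Sum>s'\<in>D. \<Sum>x\<in>A. f x s a s')"
    by (rule sum.cong[OF refl], rule sum.cong[OF refl], rule sum.swap)
  finally show ?thesis .
qed

lemma J_decomp:
  assumes vm: "valid_model m" and pol: "is_policy \<pi>" and g: "0 \<le> \<gamma>" "\<gamma> < 1"
  shows "J \<gamma> m \<pi> = (\<Sum>s0\<in>UNIV. init_of m s0 * V \<gamma> m \<pi> s0)"
proof -
  let ?p = "trans_of m" and ?r = "rew_of m" and ?d = "init_of m"
  let ?T = "\<lambda>s0 t. \<gamma> ^ t * (\<Sum>s\<in>UNIV. \<Sum>a\<in>UNIV. \<Sum>s'\<in>UNIV.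
        state_dist ?p \<pi> (\<lambda>x. if x = s0 then 1 else 0) t s * \<pi> s a * ?p s a s' * ?r s a s')"
  have p0: "\<And>s a s'. 0 \<le> ?p s a s'" and p1: "\<And>s a. (\<Sum>s'\<in>UNIV. ?p s a s') = 1"
    using vm unfolding valid_model_def by auto
  have summ: "summable (?T s0)" for s0
    by (rule term_summable[OF p0 p1 pol _ _ g]) auto
  have eq: "\<gamma> ^ t * (\<Sum>s\<in>UNIV. \<Sum>a\<in>UNIV. \<Sum>s'\<in>UNIV.
        state_dist ?p \<pi> ?d t s * \<pi> s a * ?p s a s' * ?r s a s')
      = (\<Sum>s0\<in>UNIV. ?d s0 * ?T s0 t)" for t
  proof -
    let ?D = "\<lambda>s0. state_dist ?p \<pi> (\<lambda>x. if x = s0 then 1 else 0) t"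
    have "(\<Sum>s0\<in>UNIV. ?d s0 * ?T s0 t) = (\<Sum>s0\<in>UNIV. \<Sum>s\<in>UNIV. \<Sum>a\<in>UNIV. \<Sum>s'\<in>UNIV.
       \<gamma> ^ t * (?d s0 * ?D s0 s * \<pi> s a * ?p s a s' * ?r s a s'))"
      by (simp add: sum_distrib_left mult_ac)
    also have "\<dots> = (\<Sum>s\<in>UNIV. \<Sum>a\<in>UNIV. \<Sum>s'\<in>UNIV. \<Sum>s0\<in>UNIV.
       \<gamma> ^ t * (?d s0 * ?D s0 s * \<pi> s a * ?p s a s' * ?r s a s'))"
      by (rule swap3)
    also have "\<dots> = \<gamma> ^ t * (\<Sum>s\<in>UNIV. \<Sum>a\<in>UNIV. \<Sum>s'\<in>UNIV.
        state_dist ?p \<pi> ?d t s * \<pi> s a * ?p s a s' * ?r s a s')"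
      by (subst sd_linear) (simp add: sum_distrib_left sum_distrib_right mult_ac)
    finally show ?thesis by simp
  qed
  have "J \<gamma> m \<pi> = (\<Sum>t. \<Sum>s0\<in>UNIV. ?d s0 * ?T s0 t)"
    unfolding J_def perf_from_def using eq by simp
  also have "\<dots> = (\<Sum>s0\<in>UNIV. \<Sum>t. ?d s0 * ?T s0 t)"
    by (rule suminf_sum) (use summ summable_mult in blast)
  also have "\<dots> = (\<Sum>s0\<in>UNIV. ?d s0 * (\<Sum>t. ?T s0 t))"
    by (rule sum.cong[OF refl]) (rule suminf_mult[OF summ])
  finally show ?thesis unfolding V_def perf_from_def .
qed

theorem proposition2:
  fixes \<gamma> :: real
    and mstar m :: "('s::finite, 'a::finite) model"
    and \<pi>b \<pi>r \<pi>ce :: "('s, 'a) policy"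
  assumes "0 \<le> \<gamma>" and "\<gamma> < 1"
    and "valid_model mstar" and "valid_model m"
    and "is_policy \<pi>b"
    and "is_rollout_policy \<gamma> m \<pi>b \<pi>r"
    and "is_ce_policy \<gamma> m \<pi>ce"
    and "is_PRM \<gamma> m mstar {\<pi>r, \<pi>ce}"
  shows "J \<gamma> mstar \<pi>ce \<ge> J \<gamma> mstar \<pi>r"
proof -
  have pr: "is_policy \<pi>r" using assms(6) unfolding is_rollout_policy_def by auto
  have pc: "is_policy \<pi>ce" and Vle: "\<And>s. V \<gamma> m \<pi>r s \<le> V \<gamma> m \<pi>ce s"
    using assms(7) pr unfolding is_ce_policy_def by auto
  have d0: "\<And>s. 0 \<le> init_of m s" using assms(4) unfolding valid_model_def by auto
  have "J \<gamma> m \<pi>r \<le> J \<gamma> m \<pi>ce"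
    unfolding J_decomp[OF assms(4) pr assms(1,2)] J_decomp[OF assms(4) pc assms(1,2)]
    by (rule sum_mono) (simp add: d0 Vle mult_left_mono)
  then show ?thesis using assms(8) unfolding is_PRM_def by blast
qed

end
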